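(* Let $n_u<n$, $n_b=n-n_u$, $\mathbf{A}\in\mathbb{R}^{n_u\times n_b}$ and $\mathbf{S}=\begin{bmatrix}\mathbf{A}\\ \mathbf{I}_{n_b}\end{bmatrix}\in\mathbb{R}^{n\times n_b}$. For $j=1,\dots,p$ ($p\ge2$) let $\mathbf{L}_j\in\{0,1\}^{n_j\times n}$ be selection matrices (rows are distinct rows of $\mathbf{I}_n$) such that every variable is selected by at least one $\mathbf{L}_j$; let $m=\sum_j n_j$ and $\mathbf{K}=[\mathbf{L}_1^\top\cdots\mathbf{L}_p^\top]^\top\in\{0,1\}^{m\times n}$. Suppose the base forecasts satisfy $\widehat{\mathbf{y}}=\mathbf{K}\mathbf{S}\mathbf{b}+\boldsymbol{\varepsilon}$, with $\mathbf{y}=\mathbf{S}\mathbf{b}$ the target vector, $\boldsymbol{\varepsilon}$ zero-mean with positive definite covariance $\mathbf{W}\in\mathbb{R}^{m\times m}$ (so the base forecasts are unbiased, $E(\widehat{\mathbf{y}})=\mathbf{K}E(\mathbf{y})$). Let $\mathbf{W}_c=(\mathbf{K}^\top\mathbf{W}^{-1}\mathbf{K})^{-1}$. Consider coherent linear combined forecasts of the form $\mathbf{S}\mathbf{G}\widehat{\mathbf{y}}$, $\mathbf{G}\in\mathbb{R}^{n_b\times m}$, subject to the unbiasedness constraint $\mathbf{G}\mathbf{K}\mathbf{S}=\mathbf{I}_{n_b}$, with error covariance $\mathbf{S}\mathbf{G}\mathbf{W}\mathbf{G}^\top\mathbf{S}^\top$. Then the MMSE coherent linear forecast combination, i.e.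 the one minimizing $\mathrm{tr}(\mathbf{S}\mathbf{G}\mathbf{W}\mathbf{G}^\top\mathbf{S}^\top)$ subject to $\mathbf{G}\mathbf{K}\mathbf{S}=\mathbf{I}_{n_b}$, is $$\widetilde{\mathbf{y}}^c=\mathbf{S}\mathbf{G}\widehat{\mathbf{y}},\qquad \mathbf{G}=(\mathbf{S}^\top\mathbf{W}_c^{-1}\mathbf{S})^{-1}\mathbf{S}^\top\mathbf{K}^\top\mathbf{W}^{-1}.$$
   Context: Structural representation of a linearly constrained multiple time series: $\mathbf{y}=[\mathbf{u}^\top\;\mathbf{b}^\top]^\top$ with upper (constrained) variables $\mathbf{u}=\mathbf{A}\mathbf{b}\in\mathbb{R}^{n_u}$ and free bottom variables $\mathbf{b}\in\mathbb{R}^{n_b}$, so that $\mathbf{y}=\mathbf{S}\mathbf{b}$. Expert $j$ provides forecasts $\widehat{\mathbf{y}}^j$ of $\mathbf{L}_j\mathbf{y}$, stacked into $\widehat{\mathbf{y}}=[\widehat{\mathbf{y}}^{1\top}\cdots\widehat{\mathbf{y}}^{p\top}]^\top$. *)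

theory Defs
  imports "Jordan_Normal_Form.Matrix"
begin

definition mtrace :: "real mat \<Rightarrow> real" where
  "mtrace M = (\<Sum>i<dim_row M. M $$ (i, i))"

definition minv :: "real mat \<Rightarrow> real mat" where
  "minv M = (SOME B. B \<in> carrier_mat (dim_row M) (dim_row M) \<and>
                      M * B = 1\<^sub>m (dim_row M) \<and> B * M = 1\<^sub>m (dim_row M))"

definition pos_def_mat :: "nat \<Rightarrow> real mat \<Rightarrow> bool" where
  "pos_def_mat n W \<longleftrightarrow> W \<in> carrier_mat n n \<and> transpose_mat W = W \<and>
     (\<forall>x \<in> carrier_vec n. x \<noteq> 0\<^sub>v n \<longrightarrow> x \<bullet> (W *\<^sub>v x) > 0)"

definition struct_mat :: "nat \<Rightarrow> nat \<Rightarrow> real mat \<Rightarrow> real mat" where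
  "struct_mat nu nb A = A @\<^sub>r 1\<^sub>m nb"

definition selection_mat :: "nat \<Rightarrow> nat \<Rightarrow> real mat \<Rightarrow> bool" where
  "selection_mat nj n L \<longleftrightarrow> L \<in> carrier_mat nj n \<and>
     (\<exists>f. inj_on f {..<nj} \<and> f ` {..<nj} \<subseteq> {..<n} \<and>
          (\<forall>i<nj. \<forall>k<n. L $$ (i, k) = (if k = f i then 1 else 0)))"

fun stack_mats :: "nat \<Rightarrow> real mat list \<Rightarrow> real mat" where
  "stack_mats n [] = 0\<^sub>m 0 n"
| "stack_mats n (L # Ls) = L @\<^sub>r stack_mats n Ls"

definition mse_trace :: "real mat \<Rightarrow> real mat \<Rightarrow> real mat \<Rightarrow> real" where
  "mse_trace S W G = mtrace (S * G * W * transpose_mat G * transpose_mat S)"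

end

theory Submission
  imports Defs "Jordan_Normal_Form.Determinant"
begin


lemma minv_spec:
  assumes M: "M \<in> carrier_mat n n" and B: "B \<in> carrier_mat n n" and MB: "M * B = 1\<^sub>m n" and BM: "B * M = 1\<^sub>m n"
  shows "minv M = B"
proof -
  have dr: "dim_row M = n" using M by auto
  have ex: "\<exists>B. B \<in> carrier_mat (dim_row M) (dim_row M) \<and> M * B = 1\<^sub>m (dim_row M) \<and> B * M = 1\<^sub>m (dim_row M)"
    using B MB BM dr by auto
  define C where "C = minv M"
  have C: "C \<in> carrier_mat n n" "M * C = 1\<^sub>m n" "C * M = 1\<^sub>m n"
    using someI_ex[OF ex] unfolding C_def minv_def dr by auto
  have "B = B * (M * C)" using C B by simp
  also have "\<dots> = (B * M) * C" using B M C by (simp add: assoc_mult_mat)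
  also have "\<dots> = C" using BM C by simp
  finally show ?thesis unfolding C_def by simp
qed

lemma pd_inv:
  assumes pd: "pos_def_mat n W"
  shows "\<exists>B. B \<in> carrier_mat n n \<and> W * B = 1\<^sub>m n \<and> B * W = 1\<^sub>m n"
proof -
  have W: "W \<in> carrier_mat n n" using pd unfolding pos_def_mat_def by auto
  have "det W \<noteq> 0"
  proof
    assume "det W = 0"
    then obtain v where v: "v \<in> carrier_vec n" "v \<noteq> 0\<^sub>v n" "W *\<^sub>v v = 0\<^sub>v n"
      using det_0_iff_vec_prod_zero[OF W] by auto
    then have "v \<bullet> (W *\<^sub>v v) > 0" using pd unfolding pos_def_mat_def by auto
    moreover have "v \<bullet> (W *\<^sub>v v) = 0" using v by simp
    ultimately show False by simp
  qed
  from det_non_zero_imp_unit[OF W this] show ?thesis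
    unfolding Units_def ring_mat_def by auto
qed



lemma pd_carrier: "pos_def_mat n W \<Longrightarrow> W \<in> carrier_mat n n"
  unfolding pos_def_mat_def by auto

lemma pd_minv:
  assumes pd: "pos_def_mat n W"
  shows "minv W \<in> carrier_mat n n \<and> W * minv W = 1\<^sub>m n \<and> minv W * W = 1\<^sub>m n"
proof -
  obtain B where B: "B \<in> carrier_mat n n" "W * B = 1\<^sub>m n" "B * W = 1\<^sub>m n" using pd_inv[OF pd] by auto
  have "minv W = B" by (rule minv_spec[OF pd_carrier[OF pd] B])
  then show ?thesis using B by simp
qed

lemma pd_minv_pd:
  assumes pd: "pos_def_mat n W"
  shows "pos_def_mat n (minv W)"
proof -
  define C where "C = minv W"
  have W: "W \<in> carrier_mat n n" and Wt: "transpose_mat W = W" using pd unfolding pos_def_mat_def by auto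
  have C: "C \<in> carrier_mat n n" "W * C = 1\<^sub>m n" "C * W = 1\<^sub>m n" using pd_minv[OF pd] unfolding C_def by auto
  have "transpose_mat (C * W) = 1\<^sub>m n" using C by simp
  hence t1: "W * transpose_mat C = 1\<^sub>m n" using transpose_mult[OF C(1) W] Wt by simp
  have "transpose_mat (W * C) = 1\<^sub>m n" using C by simp
  hence t2: "transpose_mat C * W = 1\<^sub>m n" using transpose_mult[OF W C(1)] Wt by simp
  have "minv W = transpose_mat C" by (rule minv_spec[OF W _ t1 t2], use C in auto)
  hence Ct: "transpose_mat C = C" unfolding C_def by simp
  have pos: "x \<bullet> (C *\<^sub>v x) > 0" if x: "x \<in> carrier_vec n" "x \<noteq> 0\<^sub>v n" for x
  proof -
    define y where "y = C *\<^sub>v x"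
    have y: "y \<in> carrier_vec n" unfolding y_def using C x by auto
    have xy: "W *\<^sub>v y = x" unfolding y_def using C W x
      by (simp add: assoc_mult_mat_vec[symmetric])
    have "y \<noteq> 0\<^sub>v n" using xy x W by auto
    hence "y \<bullet> (W *\<^sub>v y) > 0" using pd y unfolding pos_def_mat_def by auto
    moreover have "y \<bullet> (W *\<^sub>v y) = x \<bullet> (C *\<^sub>v x)"
      using xy y x comm_scalar_prod[of y n x] unfolding y_def by simp
    ultimately show ?thesis by simp
  qed
  show ?thesis unfolding pos_def_mat_def C_def[symmetric] using C Ct pos by auto
qed

lemma pd_congr:
  assumes pd: "pos_def_mat m W" and B: "B \<in> carrier_mat m k"
    and inj: "\<And>x. x \<in> carrier_vec k \<Longrightarrow> B *\<^sub>v x = 0\<^sub>v m \<Longrightarrow> x = 0\<^sub>v k"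
  shows "pos_def_mat k (transpose_mat B * W * B)"
proof -
  have W: "W \<in> carrier_mat m m" and Wt: "transpose_mat W = W" using pd unfolding pos_def_mat_def by auto
  have c: "transpose_mat B * W * B \<in> carrier_mat k k" using B W by auto
  have "transpose_mat (transpose_mat B * W * B) = transpose_mat B * transpose_mat (transpose_mat B * W)"
    using transpose_mult[of "transpose_mat B * W" k m B k] B W by auto
  also have "transpose_mat (transpose_mat B * W) = transpose_mat W * B"
    using transpose_mult[of "transpose_mat B" k m W m] B W by auto
  finally have t: "transpose_mat (transpose_mat B * W * B) = transpose_mat B * W * B"
    using Wt B W by simp
  have pos: "x \<bullet> ((transpose_mat B * W * B) *\<^sub>v x) > 0" if x: "x \<in> carrier_vec k" "x \<noteq> 0\<^sub>v k" for x
  proof -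
    define y where "y = B *\<^sub>v x"
    have y: "y \<in> carrier_vec m" unfolding y_def using B x by auto
    have "y \<noteq> 0\<^sub>v m" using inj x unfolding y_def by auto
    hence "y \<bullet> (W *\<^sub>v y) > 0" using pd y unfolding pos_def_mat_def by auto
    moreover have "(transpose_mat B * W * B) *\<^sub>v x = transpose_mat B *\<^sub>v (W *\<^sub>v y)"
    proof -
      have WB: "W * B \<in> carrier_mat m k" using W B by auto
      have "(transpose_mat B * W * B) = transpose_mat B * (W * B)" using B W by simp
      also have "\<dots> *\<^sub>v x = transpose_mat B *\<^sub>v ((W * B) *\<^sub>v x)"
        by (rule assoc_mult_mat_vec[OF _ WB x(1)], use B in auto)
      also have "(W * B) *\<^sub>v x = W *\<^sub>v y" unfolding y_def by (rule assoc_mult_mat_vec[OF W B x(1)])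
      finally show ?thesis .
    qed
    moreover have "x \<bullet> (transpose_mat B *\<^sub>v (W *\<^sub>v y)) = y \<bullet> (W *\<^sub>v y)"
      using transpose_vec_mult_scalar[OF B x(1), of "W *\<^sub>v y"] W y x B
        comm_scalar_prod[of x k "transpose_mat B *\<^sub>v (W *\<^sub>v y)"]
        comm_scalar_prod[of y m "W *\<^sub>v y"]
      unfolding y_def by auto
    ultimately show ?thesis by simp
  qed
  show ?thesis unfolding pos_def_mat_def using c t pos by auto
qed

lemma mtrace_add: "A \<in> carrier_mat n n \<Longrightarrow> B \<in> carrier_mat n n \<Longrightarrow> mtrace (A + B) = mtrace A + mtrace B"
  unfolding mtrace_def by (simp add: sum.distrib)

lemma mtrace_quad:
  assumes pd: "pos_def_mat m W" and E: "E \<in> carrier_mat n m"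
  shows "mtrace (E * W * transpose_mat E) \<ge> 0"
    and "mtrace (E * W * transpose_mat E) = 0 \<Longrightarrow> E = 0\<^sub>m n m"
proof -
  have W: "W \<in> carrier_mat m m" using pd_carrier[OF pd] .
  have d: "(E * W * transpose_mat E) $$ (i, i) = row E i \<bullet> (W *\<^sub>v row E i)" if i: "i < n" for i
  proof -
    have "E * W * transpose_mat E = E * (W * transpose_mat E)" using E W by simp
    hence "(E * W * transpose_mat E) $$ (i, i) = row E i \<bullet> col (W * transpose_mat E) i"
      using E W i by simp
    also have "col (W * transpose_mat E) i = W *\<^sub>v row E i" using E W i by (simp add: mult_mat_vec_def)
    finally show ?thesis .
  qed
  have tr: "mtrace (E * W * transpose_mat E) = (\<Sum>i<n. row E i \<bullet> (W *\<^sub>v row E i))"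
    unfolding mtrace_def using E d by simp
  have nn: "row E i \<bullet> (W *\<^sub>v row E i) \<ge> 0" if "i < n" for i
  proof (cases "row E i = 0\<^sub>v m")
    case True then show ?thesis using W by simp
  next
    case False
    have "row E i \<in> carrier_vec m" using E by (auto intro: carrier_vecI)
    then show ?thesis using False pd unfolding pos_def_mat_def by (auto intro: less_imp_le)
  qed
  show "mtrace (E * W * transpose_mat E) \<ge> 0" unfolding tr by (rule sum_nonneg, use nn in auto)
  assume z: "mtrace (E * W * transpose_mat E) = 0"
  have "\<forall>i\<in>{..<n}. row E i \<bullet> (W *\<^sub>v row E i) = 0"
    using z unfolding tr by (subst sum_nonneg_eq_0_iff[symmetric], use nn in auto)
  hence r0: "row E i = 0\<^sub>v m" if "i < n" for i
  proof -
    have "row E i \<in> carrier_vec m" using E by (auto intro: carrier_vecI)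
    then show ?thesis using that pd \<open>\<forall>i\<in>{..<n}. _\<close> unfolding pos_def_mat_def by fastforce
  qed
  show "E = 0\<^sub>m n m"
  proof (rule eq_matI)
    fix i j assume "i < dim_row (0\<^sub>m n m :: real mat)" "j < dim_col (0\<^sub>m n m :: real mat)"
    then show "E $$ (i, j) = 0\<^sub>m n m $$ (i, j)" using r0[of i] E
      by (metis carrier_matD(2) index_row(1) index_zero_mat(1) index_zero_vec(1) index_zero_mat(2) index_zero_mat(3) carrier_matD(1))
  qed (use E in auto)
qed



lemma zero_vec_split: "0\<^sub>v (a + b) = (0\<^sub>v a :: 'a :: zero vec) @\<^sub>v 0\<^sub>v b"
  by (intro eq_vecI) auto

lemma stack_props:
  assumes "\<forall>L \<in> set Ls. L \<in> carrier_mat (dim_row L) n"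
  shows "stack_mats n Ls \<in> carrier_mat (\<Sum>L\<leftarrow>Ls. dim_row L) n \<and>
    (\<forall>x \<in> carrier_vec n. stack_mats n Ls *\<^sub>v x = 0\<^sub>v (\<Sum>L\<leftarrow>Ls. dim_row L) \<longrightarrow>
        (\<forall>L \<in> set Ls. L *\<^sub>v x = 0\<^sub>v (dim_row L)))"
  using assms
proof (induction Ls)
  case Nil then show ?case by simp
next
  case (Cons L Ls)
  have L: "L \<in> carrier_mat (dim_row L) n" using Cons.prems by (meson list.set_intros(1))
  have K: "stack_mats n Ls \<in> carrier_mat (\<Sum>L\<leftarrow>Ls. dim_row L) n" using Cons.IH Cons.prems by simp
  show ?case
  proof
    show "stack_mats n (L # Ls) \<in> carrier_mat (\<Sum>L\<leftarrow>L # Ls. dim_row L) n"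
      unfolding stack_mats.simps list.map sum_list.Cons by (rule carrier_append_rows[OF L K])
    show "\<forall>x\<in>carrier_vec n. stack_mats n (L # Ls) *\<^sub>v x = 0\<^sub>v (\<Sum>L\<leftarrow>L # Ls. dim_row L) \<longrightarrow>
      (\<forall>L\<in>set (L # Ls). L *\<^sub>v x = 0\<^sub>v (dim_row L))"
    proof (intro ballI impI)
      fix x L' assume x: "x \<in> carrier_vec n" and z: "stack_mats n (L # Ls) *\<^sub>v x = 0\<^sub>v (\<Sum>L\<leftarrow>L # Ls. dim_row L)"
        and L': "L' \<in> set (L # Ls)"
      have "(L *\<^sub>v x) @\<^sub>v (stack_mats n Ls *\<^sub>v x) = 0\<^sub>v (dim_row L) @\<^sub>v 0\<^sub>v (\<Sum>L\<leftarrow>Ls. dim_row L)"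
      proof -
        have e: "stack_mats n (L # Ls) *\<^sub>v x = (L *\<^sub>v x) @\<^sub>v (stack_mats n Ls *\<^sub>v x)"
          unfolding stack_mats.simps by (rule mat_mult_append[OF L K x])
        have "(\<Sum>L\<leftarrow>L # Ls. dim_row L) = dim_row L + (\<Sum>L\<leftarrow>Ls. dim_row L)" by simp
        with z e show ?thesis by (simp only: zero_vec_split)
      qed
      hence "L *\<^sub>v x = 0\<^sub>v (dim_row L)" "stack_mats n Ls *\<^sub>v x = 0\<^sub>v (\<Sum>L\<leftarrow>Ls. dim_row L)"
        using append_vec_eq[OF mult_mat_vec_carrier[OF L x] zero_carrier_vec] by blast+
      moreover have "\<forall>L\<in>set Ls. L *\<^sub>v x = 0\<^sub>v (dim_row L)"
        using Cons.IH Cons.prems x \<open>stack_mats n Ls *\<^sub>v x = _\<close> by simp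
      ultimately show "L' *\<^sub>v x = 0\<^sub>v (dim_row L')" using L' by (cases "L' = L") auto
    qed
  qed
qed

lemma struct_inj:
  assumes A: "A \<in> carrier_mat nu nb" and x: "x \<in> carrier_vec nb"
    and z: "struct_mat nu nb A *\<^sub>v x = 0\<^sub>v (nu + nb)"
  shows "x = 0\<^sub>v nb"
proof -
  have "(A *\<^sub>v x) @\<^sub>v x = 0\<^sub>v nu @\<^sub>v 0\<^sub>v nb"
    using z unfolding struct_mat_def mat_mult_append[OF A one_carrier_mat x] zero_vec_split[symmetric]
    using x by simp
  moreover have "A *\<^sub>v x \<in> carrier_vec nu" using A x by auto
  ultimately show ?thesis using append_vec_eq[OF _ zero_carrier_vec] by blast
qed



lemma K_inj:
  assumes sel: "\<forall>L \<in> set Ls. selection_mat (dim_row L) n L"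
    and cover: "\<forall>k<n. \<exists>L \<in> set Ls. \<exists>i<dim_row L. L $$ (i, k) = 1"
    and x: "x \<in> carrier_vec n"
    and z: "stack_mats n Ls *\<^sub>v x = 0\<^sub>v (\<Sum>L\<leftarrow>Ls. dim_row L)"
  shows "x = 0\<^sub>v n"
proof -
  have Lc: "\<forall>L \<in> set Ls. L \<in> carrier_mat (dim_row L) n" using sel unfolding selection_mat_def by blast
  have allz: "\<forall>L \<in> set Ls. L *\<^sub>v x = 0\<^sub>v (dim_row L)" using stack_props[OF Lc] x z by blast
  show ?thesis
  proof (rule eq_vecI)
    fix k assume "k < dim_vec (0\<^sub>v n :: real vec)"
    hence k: "k < n" by simp
    obtain L i where L: "L \<in> set Ls" and i: "i < dim_row L" and Lik: "L $$ (i, k) = 1"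
      using cover k by blast
    obtain f where f: "\<forall>i<dim_row L. \<forall>k<n. L $$ (i, k) = (if k = f i then 1 else 0)"
      using sel L unfolding selection_mat_def by blast
    have fk: "\<And>k'. k' < n \<Longrightarrow> L $$ (i, k') = (if k' = f i then 1 else 0)" using f i by blast
    have fi: "f i = k"
    proof (rule ccontr)
      assume "f i \<noteq> k"
      hence "L $$ (i, k) = 0" using fk[OF k] by simp
      thus False using Lik by simp
    qed
    have LC: "L \<in> carrier_mat (dim_row L) n" using Lc L by blast
    have "(L *\<^sub>v x) $ i = row L i \<bullet> x" using i by simp
    also have "\<dots> = (\<Sum>k'\<in>{0..<n}. row L i $ k' * x $ k')" using x unfolding scalar_prod_def by simp
    also have "\<dots> = (\<Sum>k'\<in>{0..<n}. (if k' = k then x $ k' else 0))"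
    proof (rule sum.cong)
      fix k' assume "k' \<in> {0..<n}"
      hence k': "k' < n" by simp
      have dc: "dim_col L = n" using LC by blast
      have "row L i $ k' = L $$ (i, k')" by (rule index_row(1)[OF i], unfold dc, rule k')
      also have "\<dots> = (if k' = k then 1 else 0)" unfolding fk[OF k'] fi ..
      finally show "row L i $ k' * x $ k' = (if k' = k then x $ k' else 0)" by simp
    qed simp
    also have "\<dots> = x $ k" using k by simp
    finally have "x $ k = (L *\<^sub>v x) $ i" by simp
    also have "\<dots> = 0" using allz L i by simp
    finally show "x $ k = 0\<^sub>v n $ k" using k by simp
  qed (use x in simp)
qed

lemma assoc': "dim_col A = dim_row B \<Longrightarrow> dim_col B = dim_row C \<Longrightarrow> (A * B) * C = A * (B * (C :: 'a :: semiring_0 mat))"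
proof -
  assume h: "dim_col A = dim_row B" "dim_col B = dim_row C"
  have a: "A \<in> carrier_mat (dim_row A) (dim_col A)" by (rule carrier_matI) (rule refl)+
  have b: "B \<in> carrier_mat (dim_col A) (dim_col B)" by (rule carrier_matI) (use h in simp_all)
  have c: "C \<in> carrier_mat (dim_col B) (dim_col C)" by (rule carrier_matI) (use h in simp_all)
  show ?thesis by (rule assoc_mult_mat[OF a b c])
qed

theorem theorem2:
  fixes nu nb n :: nat and A :: "real mat" and Ls :: "real mat list"
    and W :: "real mat"
  defines "S \<equiv> struct_mat nu nb A"
    and "K \<equiv> stack_mats n Ls"
    and "m \<equiv> (\<Sum>L\<leftarrow>Ls. dim_row L)"
  defines "Wc \<equiv> minv (transpose_mat K * minv W * K)"
  defines "G0 \<equiv> minv (transpose_mat S * minv Wc * S) * transpose_mat S * transpose_mat K * minv W"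
  assumes nu_lt: "nu < n" and nb_def: "nb = n - nu"
    and A_dim: "A \<in> carrier_mat nu nb"
    and p_ge: "length Ls \<ge> 2"
    and sel: "\<forall>L \<in> set Ls. selection_mat (dim_row L) n L"
    and cover: "\<forall>k<n. \<exists>L \<in> set Ls. \<exists>i<dim_row L. L $$ (i, k) = 1"
    and W_pd: "pos_def_mat m W"
  shows "G0 \<in> carrier_mat nb m \<and> G0 * K * S = 1\<^sub>m nb \<and>
         (\<forall>G \<in> carrier_mat nb m. G * K * S = 1\<^sub>m nb \<longrightarrow>
             mse_trace S W G0 \<le> mse_trace S W G \<and>
             (mse_trace S W G = mse_trace S W G0 \<longrightarrow> G = G0))"
proof -
  have nn: "nu + nb = n" using nu_lt nb_def by simp
  have Sc: "S \<in> carrier_mat n nb" unfolding S_def struct_mat_def using A_dim nn[symmetric]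
    by (metis carrier_append_rows one_carrier_mat)
  have Sinj: "\<And>x. x \<in> carrier_vec nb \<Longrightarrow> S *\<^sub>v x = 0\<^sub>v n \<Longrightarrow> x = 0\<^sub>v nb"
    using struct_inj[OF A_dim] nn unfolding S_def by metis
  have Lc: "\<forall>L \<in> set Ls. L \<in> carrier_mat (dim_row L) n" using sel unfolding selection_mat_def by auto
  have Kc: "K \<in> carrier_mat m n" using stack_props[OF Lc] unfolding K_def m_def by blast
  have Kinj: "\<And>x. x \<in> carrier_vec n \<Longrightarrow> K *\<^sub>v x = 0\<^sub>v m \<Longrightarrow> x = 0\<^sub>v n"
    using K_inj[OF sel cover] unfolding K_def m_def by blast
  have Wc0: "W \<in> carrier_mat m m" and Wt: "transpose_mat W = W" using W_pd unfolding pos_def_mat_def by auto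
  define Wi where "Wi = minv W"
  have Wi: "Wi \<in> carrier_mat m m" "W * Wi = 1\<^sub>m m" "Wi * W = 1\<^sub>m m" using pd_minv[OF W_pd] unfolding Wi_def by auto
  have Wipd: "pos_def_mat m Wi" unfolding Wi_def by (rule pd_minv_pd[OF W_pd])
  define M where "M = transpose_mat K * Wi * K"
  have Mpd: "pos_def_mat n M" unfolding M_def by (rule pd_congr[OF Wipd Kc Kinj])
  have Mc: "M \<in> carrier_mat n n" using pd_carrier[OF Mpd] .
  have Wc_eq: "Wc = minv M" unfolding Wc_def M_def Wi_def ..
  have MM: "minv M \<in> carrier_mat n n" "M * minv M = 1\<^sub>m n" "minv M * M = 1\<^sub>m n" using pd_minv[OF Mpd] by auto
  have minvWc: "minv Wc = M" unfolding Wc_eq by (rule minv_spec[OF MM(1) Mc MM(3) MM(2)])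
  define P where "P = transpose_mat S * M * S"
  have Pinj: "\<And>x. x \<in> carrier_vec nb \<Longrightarrow> S *\<^sub>v x = 0\<^sub>v n \<Longrightarrow> x = 0\<^sub>v nb" by (rule Sinj)
  have Ppd: "pos_def_mat nb P" unfolding P_def by (rule pd_congr[OF Mpd Sc Sinj])
  have Pc: "P \<in> carrier_mat nb nb" using pd_carrier[OF Ppd] .
  define Pi where "Pi = minv P"
  have Pi: "Pi \<in> carrier_mat nb nb" "P * Pi = 1\<^sub>m nb" "Pi * P = 1\<^sub>m nb" using pd_minv[OF Ppd] unfolding Pi_def by auto
  have G0_eq: "G0 = Pi * transpose_mat S * transpose_mat K * Wi"
    unfolding G0_def minvWc Pi_def P_def Wi_def ..
  have StC: "transpose_mat S \<in> carrier_mat nb n" using Sc by auto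
  have KtC: "transpose_mat K \<in> carrier_mat n m" using Kc by auto
  have G0c: "G0 \<in> carrier_mat nb m" unfolding G0_eq using Pi StC KtC Wi by auto
  define St where "St = transpose_mat S"
  define Kt where "Kt = transpose_mat K"
  have Stc: "St \<in> carrier_mat nb n" using Sc unfolding St_def by auto
  have Ktc: "Kt \<in> carrier_mat n m" using Kc unfolding Kt_def by auto
  have G0_eq': "G0 = Pi * St * Kt * Wi" unfolding G0_eq St_def Kt_def ..
  have P_eq: "P = St * (Kt * Wi * K) * S" unfolding P_def M_def St_def Kt_def ..
  have G0B: "G0 * K * S = Pi * P"
    unfolding G0_eq' P_eq using Pi(1) Stc Ktc Wi(1) Kc Sc by (simp add: assoc')
  have G0KS: "G0 * K * S = 1\<^sub>m nb" unfolding G0B by (rule Pi(3))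
  have main: "mse_trace S W G0 \<le> mse_trace S W G \<and> (mse_trace S W G = mse_trace S W G0 \<longrightarrow> G = G0)"
    if Gc: "G \<in> carrier_mat nb m" and GKS: "G * K * S = 1\<^sub>m nb" for G
  proof -
    define D where "D = G - G0"
    have Dc: "D \<in> carrier_mat nb m" unfolding D_def using Gc G0c by auto
    have GD: "G = G0 + D" unfolding D_def using Gc G0c by (intro eq_matI) auto
    define Dt where "Dt = transpose_mat D"
    have Dtc: "Dt \<in> carrier_mat m nb" unfolding Dt_def using Dc by auto
    have DB: "D * K * S = 0\<^sub>m nb nb"
    proof -
      have "D * K * S = G * K * S - G0 * K * S" unfolding D_def using Gc G0c Kc Sc
        by (simp add: assoc' minus_mult_distrib_mat[of G nb m G0 "K * S" nb])
      also have "\<dots> = 0\<^sub>m nb nb" unfolding GKS G0KS by simp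
      finally show ?thesis .
    qed
    have KtDt: "St * (Kt * Dt) = 0\<^sub>m nb nb"
    proof -
      have "transpose_mat (D * K * S) = St * (Kt * Dt)"
      proof -
        have "D * K * S = D * (K * S)" using Dc Kc Sc by (simp add: assoc')
        also have "transpose_mat \<dots> = transpose_mat (K * S) * transpose_mat D"
          by (rule transpose_mult[of D nb m], use Dc Kc Sc in auto)
        also have "transpose_mat (K * S) = transpose_mat S * transpose_mat K"
          by (rule transpose_mult[OF Kc Sc])
        finally show ?thesis unfolding St_def Kt_def Dt_def using Dc Kc Sc by (simp add: assoc')
      qed
      then show ?thesis unfolding DB by simp
    qed
    have C0: "G0 * W * Dt = 0\<^sub>m nb nb"
    proof -
      have "G0 * W * Dt = Pi * (St * (Kt * ((Wi * W) * Dt)))"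
        unfolding G0_eq' using Pi(1) Stc Ktc Wi(1) Wc0 Dtc by (simp add: assoc')
      also have "\<dots> = Pi * (St * (Kt * Dt))" unfolding Wi(3) using Dtc by simp
      also have "\<dots> = 0\<^sub>m nb nb" unfolding KtDt using Pi(1) by simp
      finally show ?thesis .
    qed
    define R0 where "R0 = S * G0"
    define E where "E = S * D"
    have R0c: "R0 \<in> carrier_mat n m" unfolding R0_def using Sc G0c by auto
    have Ec: "E \<in> carrier_mat n m" unfolding E_def using Sc Dc by auto
    have SG: "S * G = R0 + E" unfolding R0_def E_def GD using Sc G0c Dc by (simp add: mult_add_distrib_mat)
    have X: "\<And>G'. G' \<in> carrier_mat nb m \<Longrightarrow> mse_trace S W G' = mtrace ((S * G') * W * transpose_mat (S * G'))"
      unfolding mse_trace_def using Sc Wc0 by (simp add: transpose_mult[of S n nb] assoc')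
    have cross1: "R0 * W * transpose_mat E = 0\<^sub>m n n"
    proof -
      have "R0 * W * transpose_mat E = S * ((G0 * W * Dt) * St)" unfolding R0_def E_def Dt_def St_def
        using Sc G0c Wc0 Dc by (simp add: transpose_mult[of S n nb] assoc')
      then show ?thesis unfolding C0 using Stc Sc by simp
    qed
    have cross2: "E * W * transpose_mat R0 = 0\<^sub>m n n"
    proof -
      have "transpose_mat (R0 * W * transpose_mat E) = E * W * transpose_mat R0"
        using R0c Ec Wc0 Wt by (simp add: transpose_mult[of _ n m _ n] transpose_mult[of W m m _ n] assoc')
      then show ?thesis unfolding cross1 by simp
    qed
    have expand: "(R0 + E) * W * transpose_mat (R0 + E) = R0 * W * transpose_mat R0 + E * W * transpose_mat E"
    proof -
      have "(R0 + E) * W * transpose_mat (R0 + E) = (R0 * W + E * W) * (transpose_mat R0 + transpose_mat E)"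
        using R0c Ec Wc0 by (simp add: add_mult_distrib_mat[of R0 n m E W m] transpose_add[of R0 n m E])
      also have "\<dots> = (R0 * W * transpose_mat R0 + E * W * transpose_mat R0) + (R0 * W * transpose_mat E + E * W * transpose_mat E)"
        using R0c Ec Wc0 by (simp add: mult_add_distrib_mat[of _ n m _ n] add_mult_distrib_mat[of _ n m _ _ n])
      also have "\<dots> = R0 * W * transpose_mat R0 + E * W * transpose_mat E"
        unfolding cross1 cross2 using R0c Ec Wc0 by simp
      finally show ?thesis .
    qed
    have trG: "mse_trace S W G = mse_trace S W G0 + mtrace (E * W * transpose_mat E)"
      unfolding X[OF Gc] X[OF G0c] SG expand R0_def[symmetric]
      by (rule mtrace_add, use R0c Ec Wc0 in auto)
    have ge: "mtrace (E * W * transpose_mat E) \<ge> 0" by (rule mtrace_quad(1)[OF W_pd Ec])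
    have eq: "G = G0" if "mse_trace S W G = mse_trace S W G0"
    proof -
      have "E = 0\<^sub>m n m" using mtrace_quad(2)[OF W_pd Ec] that trG by simp
      have D0: "D = 0\<^sub>m nb m"
      proof (rule eq_matI)
        fix i j assume ij: "i < dim_row (0\<^sub>m nb m :: real mat)" "j < dim_col (0\<^sub>m nb m :: real mat)"
        have "col E j = S *\<^sub>v col D j" unfolding E_def using Sc Dc ij by (simp add: mult_mat_vec_def)
        hence "S *\<^sub>v col D j = 0\<^sub>v n" using \<open>E = 0\<^sub>m n m\<close> ij by simp
        hence "col D j = 0\<^sub>v nb" using Sinj Dc by auto
        then show "D $$ (i, j) = 0\<^sub>m nb m $$ (i, j)" using ij Dc
          by (metis carrier_matD(1) carrier_matD(2) index_col index_zero_mat(1) index_zero_mat(2) index_zero_mat(3) index_zero_vec(1))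
      qed (use Dc in auto)
      show ?thesis unfolding GD D0 using G0c by simp
    qed
    show ?thesis using trG ge eq by simp
  qed
  show ?thesis using G0c G0KS main by blast
qed

end
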